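(* Let $0<\mu<\min\{4,N\}$, $\Omega$ satisfy $(A_\rho)$, $f\in\hat F$ with $\|f\|_{H^{-1}}<e_{00}$, and let $u_1$ be the positive bounded solution of $(P_f)$ with $u_1\in\mathcal N_f^+$, $\mathcal J_f(u_1)=\Upsilon_f$. Then there is a constant $\hat C>0$ such that for every $\Theta<1$ and every bounded set of $t\ge0$, $$b(u_1+tg_\rho^{\varepsilon,\sigma})\ge b(u_1)+b(tg_\rho^{\varepsilon,\sigma})+\hat C t^{2\cdot2^*_\mu-1}\int_\Omega\int_\Omega\frac{(g_\rho^{\varepsilon,\sigma}(x))^{2^*_\mu}(g_\rho^{\varepsilon,\sigma}(y))^{2^*_\mu-1}u_1(y)}{|x-y|^\mu}dxdy+2\cdot2^*_\mu\,t\int_\Omega\int_\Omega\frac{(u_1(x))^{2^*_\mu}(u_1(y))^{2^*_\mu-1}g_\rho^{\varepsilon,\sigma}(y)}{|x-y|^\mu}dxdy-O\big(\varepsilon^{\frac{2N-\mu}{4}\Theta}\big)$$ as $\varepsilon\to0^+$.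
   Context: $N\ge3$, $2^*_\mu=\frac{2N-\mu}{N-2}$, $u^+=\max(u,0)$. $(A_\rho)$, $\rho\in(0,\frac12)$: $\Omega$ smooth bounded with $\{\rho<|x|<1/\rho\}\subset\Omega$ and $\{|x|<\rho\}\not\subseteq\overline\Omega$. $a(u)=\int_\Omega|\nabla u|^2$, $b(u)=\int_\Omega\int_\Omega\frac{(u^+(x))^{2^*_\mu}(u^+(y))^{2^*_\mu}}{|x-y|^\mu}dxdy$, $\hat F=\{f\in L^\infty(\Omega):f\ge0,f\not\equiv0\}$, $\mathcal J_f(u)=\frac12a(u)-\frac1{2\cdot2^*_\mu}b(u)-\int_\Omega fu$, $(P_f)$ its Euler–Lagrange equation with Dirichlet condition, $\mathcal N_f=\{u\ne0:u^+\not\equiv0,\langle\mathcal J_f'(u),u\rangle=0\}$, $\mathcal N_f^+=\{u\in\mathcal N_f:\frac{d^2}{dt^2}\mathcal J_f(tu)|_{t=1}>0\}$, $\Upsilon_f=\inf_{\mathcal N_f}\mathcal J_f$. $S_{H,L}$ the Hardy–Littlewood–Sobolev best constant; $e_{00}=C_{N,\mu}S_{H,L}^{\frac{2^*_\mu}{2\cdot2^*_\mu-2}}$, $C_{N,\mu}=(\frac1{2\cdot2^*_\mu-1})^{\frac{2\cdot2^*_\mu-1}{2\cdot2^*_\mu-2}}(2\cdot2^*_\mu-2)$. $g_\rho^{\varepsilon,\sigma}=\upsilon_\rho u_\varepsilon^\sigma$ where $\upsilon_\rho\in C_c^\infty$ radial, $0\le\upsilon_\rho\le1$, $=0$ for $|x|<\frac{3\rho}2$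 and $|x|\ge\frac3{4\rho}$, $=1$ for $2\rho\le|x|\le\frac1{2\rho}$, and $u_\varepsilon^\sigma(x)=c_{N,\mu}\frac{(N(N-2)\varepsilon^2)^{(N-2)/4}}{(\varepsilon^2+|x-(1-\varepsilon)\sigma|^2)^{(N-2)/2}}$, $\sigma\in\mathbb S^{N-1}$, $0<\varepsilon\le1$, normalized minimizers of $S_{H,L}$. *)

theory Defs
  imports "HOL-Analysis.Analysis"
begin

text \<open>Points of R^N are elements of a Euclidean space 'a, N = DIM('a).\<close>

coinductive smooth_on :: "'a::euclidean_space set \<Rightarrow> ('a \<Rightarrow> real) \<Rightarrow> bool" where
  "f differentiable_on S \<Longrightarrow> (\<And>v. smooth_on S (\<lambda>x. frechet_derivative f (at x) v))
     \<Longrightarrow> smooth_on S f"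

definition grad :: "('a::euclidean_space \<Rightarrow> real) \<Rightarrow> 'a \<Rightarrow> 'a" where
  "grad \<phi> x = (\<Sum>i\<in>Basis. frechet_derivative \<phi> (at x) i *\<^sub>R i)"

definition test_fun :: "'a::euclidean_space set \<Rightarrow> ('a \<Rightarrow> real) \<Rightarrow> bool" where
  "test_fun \<Omega> \<phi> \<longleftrightarrow> smooth_on UNIV \<phi> \<and> compact (closure {x. \<phi> x \<noteq> 0})
      \<and> closure {x. \<phi> x \<noteq> 0} \<subseteq> \<Omega>"

definition smooth_bounded_domain :: "'a::euclidean_space set \<Rightarrow> bool" where
  "smooth_bounded_domain \<Omega> \<longleftrightarrow> open \<Omega> \<and> bounded \<Omega> \<and> \<Omega> \<noteq> {} \<and>
     (\<forall>p\<in>frontier \<Omega>. \<exists>U \<phi>. open U \<and> p \<in> U \<and> smooth_on U \<phi> \<and>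
        (\<forall>x\<in>U. frechet_derivative \<phi> (at x) \<noteq> (\<lambda>_. 0)) \<and>
        \<Omega> \<inter> U = {x\<in>U. \<phi> x < 0})"

definition cond_A :: "real \<Rightarrow> 'a::euclidean_space set \<Rightarrow> bool" where
  "cond_A \<rho> \<Omega> \<longleftrightarrow> 0 < \<rho> \<and> \<rho> < 1/2 \<and> smooth_bounded_domain \<Omega> \<and>
     {x. \<rho> < norm x \<and> norm x < 1/\<rho>} \<subseteq> \<Omega> \<and> \<not> ({x. norm x < \<rho>} \<subseteq> closure \<Omega>)"

definition L2 :: "('a::euclidean_space \<Rightarrow> real) \<Rightarrow> bool" where
  "L2 u \<longleftrightarrow> u \<in> borel_measurable lborel \<and> integrable lborel (\<lambda>x. (u x)\<^sup>2)"

definition L2v :: "('a::euclidean_space \<Rightarrow> 'a) \<Rightarrow> bool" where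
  "L2v G \<longleftrightarrow> G \<in> borel_measurable lborel \<and> integrable lborel (\<lambda>x. (norm (G x))\<^sup>2)"

text \<open>u (extended by zero) lies in H_0^1(Omega) with weak gradient G: it is the H^1-limit
  of test functions supported in Omega.\<close>
definition H01_grad :: "'a::euclidean_space set \<Rightarrow> ('a \<Rightarrow> real) \<Rightarrow> ('a \<Rightarrow> 'a) \<Rightarrow> bool" where
  "H01_grad \<Omega> u G \<longleftrightarrow> L2 u \<and> L2v G \<and>
     (\<exists>\<phi>::nat \<Rightarrow> 'a \<Rightarrow> real. (\<forall>n. test_fun \<Omega> (\<phi> n)) \<and>
        (\<lambda>n. LINT x|lborel. (\<phi> n x - u x)\<^sup>2) \<longlonglongrightarrow> 0 \<and>
        (\<lambda>n. LINT x|lborel. (norm (grad (\<phi> n) x - G x))\<^sup>2) \<longlonglongrightarrow> 0)"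

definition H01 :: "'a::euclidean_space set \<Rightarrow> ('a \<Rightarrow> real) \<Rightarrow> bool" where
  "H01 \<Omega> u \<longleftrightarrow> (\<exists>G. H01_grad \<Omega> u G)"

definition wgrad :: "'a::euclidean_space set \<Rightarrow> ('a \<Rightarrow> real) \<Rightarrow> 'a \<Rightarrow> 'a" where
  "wgrad \<Omega> u = (SOME G. H01_grad \<Omega> u G)"

definition crit :: "'a::euclidean_space itself \<Rightarrow> real \<Rightarrow> real" where
  "crit _ \<mu> = (2 * real DIM('a) - \<mu>) / (real DIM('a) - 2)"

definition a_fun :: "'a::euclidean_space set \<Rightarrow> ('a \<Rightarrow> real) \<Rightarrow> real" where
  "a_fun \<Omega> u = (LINT x:\<Omega>|lborel. (norm (wgrad \<Omega> u x))\<^sup>2)"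

definition dbl :: "'a::euclidean_space set \<Rightarrow> ('a \<Rightarrow> 'a \<Rightarrow> real) \<Rightarrow> real" where
  "dbl \<Omega> F = set_lebesgue_integral (lborel \<Otimes>\<^sub>M lborel) (\<Omega> \<times> \<Omega>) (\<lambda>(x, y). F x y)"

definition b_fun :: "'a::euclidean_space set \<Rightarrow> real \<Rightarrow> ('a \<Rightarrow> real) \<Rightarrow> real" where
  "b_fun \<Omega> \<mu> u = dbl \<Omega> (\<lambda>x y. (max (u x) 0) powr crit TYPE('a) \<mu> * (max (u y) 0) powr crit TYPE('a) \<mu>
                                  / (norm (x - y)) powr \<mu>)"

definition J_fun :: "'a::euclidean_space set \<Rightarrow> real \<Rightarrow> ('a \<Rightarrow> real) \<Rightarrow> ('a \<Rightarrow> real) \<Rightarrow> real" where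
  "J_fun \<Omega> \<mu> f u = a_fun \<Omega> u / 2 - b_fun \<Omega> \<mu> u / (2 * crit TYPE('a) \<mu>)
                    - (LINT x:\<Omega>|lborel. f x * u x)"

definition hatF :: "'a::euclidean_space set \<Rightarrow> ('a \<Rightarrow> real) set" where
  "hatF \<Omega> = {f. f \<in> borel_measurable lborel \<and>
                  (\<exists>M. AE x in lborel. x \<in> \<Omega> \<longrightarrow> \<bar>f x\<bar> \<le> M) \<and>
                  (AE x in lborel. x \<in> \<Omega> \<longrightarrow> 0 \<le> f x) \<and>
                  \<not> (AE x in lborel. x \<in> \<Omega> \<longrightarrow> f x = 0)}"

definition Hm1_norm :: "'a::euclidean_space set \<Rightarrow> ('a \<Rightarrow> real) \<Rightarrow> real" where
  "Hm1_norm \<Omega> f = Sup {\<bar>LINT x:\<Omega>|lborel. f x * u x\<bar> | u. H01 \<Omega> u \<and> a_fun \<Omega> u \<le> 1}"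

text \<open>weak solution of (P_f): -Delta u = (int (u^+(y))^p/|x-y|^mu dy) (u^+)^(p-1) + f in Omega, u = 0 on the boundary\<close>
definition weak_solution :: "'a::euclidean_space set \<Rightarrow> real \<Rightarrow> ('a \<Rightarrow> real) \<Rightarrow> ('a \<Rightarrow> real) \<Rightarrow> bool" where
  "weak_solution \<Omega> \<mu> f u \<longleftrightarrow> H01 \<Omega> u \<and>
     (\<forall>\<phi>. test_fun \<Omega> \<phi> \<longrightarrow>
        (LINT x:\<Omega>|lborel. wgrad \<Omega> u x \<bullet> grad \<phi> x)
        - dbl \<Omega> (\<lambda>x y. (max (u x) 0) powr crit TYPE('a) \<mu> * (max (u y) 0) powr (crit TYPE('a) \<mu> - 1)
                         * \<phi> y / (norm (x - y)) powr \<mu>)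
        - (LINT x:\<Omega>|lborel. f x * \<phi> x) = 0)"

text \<open>Nehari set: <J_f'(u),u> = d/ds J_f(su) at s = 1\<close>
definition Nehari :: "'a::euclidean_space set \<Rightarrow> real \<Rightarrow> ('a \<Rightarrow> real) \<Rightarrow> ('a \<Rightarrow> real) set" where
  "Nehari \<Omega> \<mu> f = {u. H01 \<Omega> u \<and> \<not> (AE x in lborel. u x = 0) \<and>
                       \<not> (AE x in lborel. max (u x) 0 = 0) \<and>
                       ((\<lambda>s. J_fun \<Omega> \<mu> f (\<lambda>x. s * u x)) has_real_derivative 0) (at 1)}"

definition Nehari_plus :: "'a::euclidean_space set \<Rightarrow> real \<Rightarrow> ('a \<Rightarrow> real) \<Rightarrow> ('a \<Rightarrow> real) set" where
  "Nehari_plus \<Omega> \<mu> f = {u \<in> Nehari \<Omega> \<mu> f. \<exists>D d.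
       (\<forall>\<^sub>F s in nhds 1. ((\<lambda>s. J_fun \<Omega> \<mu> f (\<lambda>x. s * u x)) has_real_derivative D s) (at s)) \<and>
       (D has_real_derivative d) (at 1) \<and> d > 0}"

definition Upsilon :: "'a::euclidean_space set \<Rightarrow> real \<Rightarrow> ('a \<Rightarrow> real) \<Rightarrow> ereal" where
  "Upsilon \<Omega> \<mu> f = (INF v\<in>Nehari \<Omega> \<mu> f. ereal (J_fun \<Omega> \<mu> f v))"

definition a_RN :: "('a::euclidean_space \<Rightarrow> real) \<Rightarrow> real" where
  "a_RN \<phi> = (LINT x|lborel. (norm (grad \<phi> x))\<^sup>2)"

definition b_RN :: "real \<Rightarrow> ('a::euclidean_space \<Rightarrow> real) \<Rightarrow> real" where
  "b_RN \<mu> \<phi> = integral\<^sup>L (lborel \<Otimes>\<^sub>M lborel)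
      (\<lambda>(x, y). \<bar>\<phi> x\<bar> powr crit TYPE('a) \<mu> * \<bar>\<phi> y\<bar> powr crit TYPE('a) \<mu> / (norm (x - y)) powr \<mu>)"

text \<open>best constant S_{H,L} (infimum over C_c^infinity(R^N), dense in D^{1,2})\<close>
definition S_HL :: "'a::euclidean_space itself \<Rightarrow> real \<Rightarrow> real" where
  "S_HL _ \<mu> = Inf {a_RN \<phi> / (b_RN \<mu> \<phi>) powr (1 / crit TYPE('a) \<mu>) | \<phi>::'a \<Rightarrow> real.
                    test_fun UNIV \<phi> \<and> (\<exists>x. \<phi> x \<noteq> 0)}"

definition C_Nmu :: "'a::euclidean_space itself \<Rightarrow> real \<Rightarrow> real" where
  "C_Nmu _ \<mu> = (let p = crit TYPE('a) \<mu> in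
      (1 / (2 * p - 1)) powr ((2 * p - 1) / (2 * p - 2)) * (2 * p - 2))"

definition e00 :: "'a::euclidean_space itself \<Rightarrow> real \<Rightarrow> real" where
  "e00 _ \<mu> = (let p = crit TYPE('a) \<mu> in
      C_Nmu TYPE('a) \<mu> * S_HL TYPE('a) \<mu> powr (p / (2 * p - 2)))"

definition bubble1 :: "'a::euclidean_space \<Rightarrow> real" where
  "bubble1 x = (let N = real DIM('a) in
      (N * (N - 2)) powr ((N - 2) / 4) / (1 + (norm x)\<^sup>2) powr ((N - 2) / 2))"

text \<open>normalisation constant c_{N,mu}: c * bubble1 satisfies a = b on R^N, i.e. solves
  -Delta u = (|x|^(-mu) * |u|^p) |u|^(p-2) u (normalized minimizer of S_{H,L})\<close>
definition c_Nmu :: "'a::euclidean_space itself \<Rightarrow> real \<Rightarrow> real" where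
  "c_Nmu _ \<mu> = (a_RN (bubble1 :: 'a \<Rightarrow> real) / b_RN \<mu> (bubble1 :: 'a \<Rightarrow> real))
                  powr (1 / (2 * crit TYPE('a) \<mu> - 2))"

definition u_eps :: "real \<Rightarrow> real \<Rightarrow> 'a \<Rightarrow> 'a::euclidean_space \<Rightarrow> real" where
  "u_eps \<mu> \<epsilon> \<sigma> x = (let N = real DIM('a) in
      c_Nmu TYPE('a) \<mu> * (N * (N - 2) * \<epsilon>\<^sup>2) powr ((N - 2) / 4)
        / (\<epsilon>\<^sup>2 + (norm (x - (1 - \<epsilon>) *\<^sub>R \<sigma>))\<^sup>2) powr ((N - 2) / 2))"

definition cutoff :: "real \<Rightarrow> ('a::euclidean_space \<Rightarrow> real) \<Rightarrow> bool" where
  "cutoff \<rho> \<upsilon> \<longleftrightarrow> test_fun UNIV \<upsilon> \<and> (\<forall>x y. norm x = norm y \<longrightarrow> \<upsilon> x = \<upsilon> y) \<and>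
     (\<forall>x. 0 \<le> \<upsilon> x \<and> \<upsilon> x \<le> 1) \<and>
     (\<forall>x. norm x < 3 * \<rho> / 2 \<or> norm x \<ge> 3 / (4 * \<rho>) \<longrightarrow> \<upsilon> x = 0) \<and>
     (\<forall>x. 2 * \<rho> \<le> norm x \<and> norm x \<le> 1 / (2 * \<rho>) \<longrightarrow> \<upsilon> x = 1)"

definition g_fun :: "('a::euclidean_space \<Rightarrow> real) \<Rightarrow> real \<Rightarrow> real \<Rightarrow> 'a \<Rightarrow> 'a \<Rightarrow> real" where
  "g_fun \<upsilon> \<mu> \<epsilon> \<sigma> x = \<upsilon> x * u_eps \<mu> \<epsilon> \<sigma> x"

end

theory Submission
  imports Defs "HOL-Analysis.Analysis"
begin


lemma bern_powr:
  fixes s q :: real assumes "0 \<le> s" "1 \<le> q"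
  shows "1 + q * s \<le> (1 + s) powr q"
proof -
  let ?h = "\<lambda>x::real. (1 + x) powr q - 1 - q * x"
  have "?h 0 \<le> ?h s"
  proof (rule DERIV_nonneg_imp_nondecreasing[of 0 s ?h])
    fix x assume x: "0 \<le> x" "x \<le> s"
    show "\<exists>y. (?h has_real_derivative y) (at x) \<and> 0 \<le> y"
    proof (intro exI conjI)
      show "(?h has_real_derivative (q * (1 + x) powr (q - 1) * 1 - 0 - q * 1)) (at x)"
        using x by (auto intro!: derivative_eq_intros)
      have "1 \<le> (1 + x) powr (q - 1)"
        using x assms by (intro ge_one_powr_ge_zero) auto
      then show "0 \<le> q * (1 + x) powr (q - 1) * 1 - 0 - q * 1"
        using assms by (simp add: algebra_simps)
    qed
  qed (use assms in auto)
  then show ?thesis by simp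
qed

lemma bern2:
  fixes c d q :: real assumes "0 \<le> c" "0 \<le> d" "1 \<le> q"
  shows "c powr q + q * c powr (q - 1) * d \<le> (c + d) powr q"
proof (cases "c = 0")
  case True then show ?thesis using assms by simp
next
  case False
  then have c: "c > 0" using assms by simp
  have "(c + d) powr q = (c * (1 + d / c)) powr q" using c by (simp add: distrib_left)
  also have "\<dots> = c powr q * (1 + d / c) powr q" using c assms by (simp add: powr_mult)
  finally have e: "(c + d) powr q = c powr q * (1 + d / c) powr q" .
  have "c powr q * (1 + q * (d / c)) \<le> c powr q * (1 + d / c) powr q"
    using bern_powr[of "d/c" q] c assms by (intro mult_left_mono) auto
  moreover have "c powr q * (1 + q * (d / c)) = c powr q + q * c powr (q - 1) * d"
    using c by (simp add: powr_diff field_simps)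
  ultimately show ?thesis using e by simp
qed

lemma superadd:
  fixes a b q :: real assumes "0 \<le> a" "0 \<le> b" "1 \<le> q"
  shows "a powr q + b powr q \<le> (a + b) powr q"
proof (cases "a + b = 0")
  case True then have "a = 0" "b = 0" using assms by auto
  then show ?thesis by simp
next
  case False
  then have ab: "a + b > 0" using assms by simp
  have "(a + b) powr q = (a + b) powr (q - 1) * (a + b)"
    using powr_add[of "a+b" "q-1" 1] ab by simp
  then have "(a + b) powr q = (a + b) powr (q - 1) * a + (a + b) powr (q - 1) * b"
    by (simp add: distrib_left)
  moreover have "a powr q \<le> (a + b) powr (q - 1) * a"
  proof (cases "a = 0")
    case False
    then have "a powr q = a powr (q - 1) * a" using assms by (simp add: powr_diff)
    also have "\<dots> \<le> (a + b) powr (q - 1) * a" using assms by (intro mult_right_mono powr_mono2) auto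
    finally show ?thesis .
  qed simp
  moreover have "b powr q \<le> (a + b) powr (q - 1) * b"
  proof (cases "b = 0")
    case False
    then have "b powr q = b powr (q - 1) * b" using assms by (simp add: powr_diff)
    also have "\<dots> \<le> (a + b) powr (q - 1) * b" using assms by (intro mult_right_mono powr_mono2) auto
    finally show ?thesis .
  qed simp
  ultimately show ?thesis by simp
qed

lemma ineq1:
  fixes a b p :: real assumes "0 \<le> a" "0 \<le> b" "2 \<le> p"
  shows "a powr p + b powr p + p * a powr (p - 1) * b \<le> (a + b) powr p"
proof (cases "a + b = 0")
  case True then have "a = 0" "b = 0" using assms by auto
  then show ?thesis by simp
next
  case False
  then have ab: "a + b > 0" using assms by simp
  have "(a + b) powr p = (a + b) powr (p - 1) * (a + b)"
    using powr_add[of "a+b" "p-1" 1] ab by simp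
  then have e: "(a + b) powr p = a * (a + b) powr (p - 1) + b * (a + b) powr (p - 1)"
    by (simp add: algebra_simps)
  have 1: "a * (a powr (p - 1) + (p - 1) * a powr (p - 1 - 1) * b) \<le> a * (a + b) powr (p - 1)"
    using bern2[of a b "p - 1"] assms by (intro mult_left_mono) auto
  have 2: "b * (a powr (p - 1) + b powr (p - 1)) \<le> b * (a + b) powr (p - 1)"
    using superadd[of a b "p - 1"] assms by (intro mult_left_mono) auto
  have 3: "a * a powr (p - 1) = a powr p"
    by (cases "a = 0") (use assms in \<open>auto simp: powr_diff\<close>)
  have 4: "a * ((p - 1) * a powr (p - 1 - 1) * b) = (p - 1) * a powr (p - 1) * b"
    by (cases "a = 0") (use assms in \<open>auto simp: powr_diff power2_eq_square\<close>)
  have 5: "b * b powr (p - 1) = b powr p"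
    by (cases "b = 0") (use assms in \<open>auto simp: powr_diff\<close>)
  show ?thesis using 1 2 3 4 5 e by (simp add: algebra_simps)
qed

lemma pointwise:
  fixes a b c d p :: real assumes "0 \<le> a" "0 \<le> b" "0 \<le> c" "0 \<le> d" "2 \<le> p"
  shows "a powr p * c powr p + b powr p * d powr p + p * (a powr p * c powr (p - 1) * d)
      + p * (a powr (p - 1) * b * c powr p) + p * (b powr p * d powr (p - 1) * c)
      \<le> (a + b) powr p * (c + d) powr p"
proof -
  have cd: "0 \<le> (c + d) powr p" by simp
  have A: "(a powr p + b powr p + p * a powr (p - 1) * b) * (c + d) powr p \<le> (a + b) powr p * (c + d) powr p"
    using ineq1[of a b p] assms by (intro mult_right_mono) auto
  have B1: "a powr p * (c powr p + p * c powr (p - 1) * d) \<le> a powr p * (c + d) powr p"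
    using bern2[of c d p] assms by (intro mult_left_mono) auto
  have B2: "b powr p * (d powr p + p * d powr (p - 1) * c) \<le> b powr p * (c + d) powr p"
    using bern2[of d c p] assms by (intro mult_left_mono) (auto simp: add.commute)
  have B3: "p * a powr (p - 1) * b * c powr p \<le> p * a powr (p - 1) * b * (c + d) powr p"
    using assms by (intro mult_left_mono powr_mono2) auto
  show ?thesis using A B1 B2 B3 by (simp add: algebra_simps)
qed


lemma emeasure_ball_eq:
  fixes c :: "'a::euclidean_space" assumes "r \<ge> 0"
  shows "emeasure lborel (ball c r) = ennreal (r ^ DIM('a) * measure lborel (ball (0::'a) 1))"
proof -
  have "emeasure lborel (ball c r) = ennreal (measure lborel (ball c r))"
    using emeasure_lborel_ball_finite[of c r] by (subst emeasure_eq_ennreal_measure) auto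
  then show ?thesis using content_ball_conv_unit_ball[OF assms, of c] by simp
qed

lemma shell_exists:
  fixes R x :: real assumes "0 < x" "x < R"
  shows "\<exists>k. R / 2 ^ Suc k \<le> x \<and> x < R / 2 ^ k"
proof -
  obtain n :: nat where n: "R / x < real n" using reals_Archimedean2 by blast
  have "real n < 2 ^ n" by (metis of_nat_less_two_power)
  then have "R / x < 2 ^ n" using n by linarith
  then have ex: "R / 2 ^ n \<le> x" using assms by (simp add: field_simps)
  define m where "m = (LEAST n. R / 2 ^ n \<le> x)"
  have m1: "R / 2 ^ m \<le> x" unfolding m_def by (rule LeastI[of _ n]) (rule ex)
  have m0: "m \<noteq> 0"
  proof
    assume "m = 0" with m1 have "R \<le> x" by simp
    with assms show False by simp
  qed
  then obtain k where k: "m = Suc k" by (cases m) auto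
  have "\<not> R / 2 ^ k \<le> x" using not_less_Least[of k "\<lambda>n. R / 2 ^ n \<le> x"] k unfolding m_def by auto
  then show ?thesis using m1 k by auto
qed

lemma ball_kernel:
  fixes R \<mu> :: real assumes R: "R > 0" and mu: "0 \<le> \<mu>" "\<mu> < DIM('a::euclidean_space)"
  shows "(\<integral>\<^sup>+ z. indicator (ball (0::'a) R) z * ennreal (1 / norm z powr \<mu>) \<partial>lborel) < \<infinity>"
proof -
  define V where "V = measure lborel (ball (0::'a) 1)"
  have V: "V \<ge> 0" unfolding V_def by simp
  define N where "N = DIM('a)"
  define c where "c = (\<lambda>k::nat. 1 / (R / 2 ^ Suc k) powr \<mu>)"
  have cpos: "\<And>k. c k \<ge> 0" unfolding c_def by simp
  have pw: "indicator (ball (0::'a) R) z * ennreal (1 / norm z powr \<mu>)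
      \<le> (\<Sum>k. ennreal (c k) * indicator (ball (0::'a) (R / 2 ^ k)) z)" for z
  proof (cases "z \<in> ball 0 R \<and> z \<noteq> 0")
    case True
    then have "0 < norm z" "norm z < R" by auto
    from shell_exists[OF this] obtain k where k: "R / 2 ^ Suc k \<le> norm z" "norm z < R / 2 ^ k" by blast
    have "1 / norm z powr \<mu> \<le> c k"
      unfolding c_def using k R mu True
      by (intro divide_left_mono powr_mono2 mult_pos_pos) auto
    then have "indicator (ball (0::'a) R) z * ennreal (1 / norm z powr \<mu>)
        \<le> ennreal (c k) * indicator (ball (0::'a) (R / 2 ^ k)) z"
      using True k by (auto simp: indicator_def intro: ennreal_leI)
    also have "\<dots> \<le> (\<Sum>k. ennreal (c k) * indicator (ball (0::'a) (R / 2 ^ k)) z)"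
      using sum_le_suminf[OF summableI, of "{k}" "\<lambda>i. ennreal (c i) * indicator (ball (0::'a) (R / 2 ^ i)) z"]
      by (simp only: sum.empty sum.insert_if finite.intros empty_iff add_0_right if_False zero_le empty_subsetI insert_subset UNIV_I simp_thms)
    finally show ?thesis .
  next
    case False
    then show ?thesis by (auto simp: indicator_def)
  qed
  have "(\<integral>\<^sup>+ z. indicator (ball (0::'a) R) z * ennreal (1 / norm z powr \<mu>) \<partial>lborel)
      \<le> (\<integral>\<^sup>+ z. (\<Sum>k. ennreal (c k) * indicator (ball (0::'a) (R / 2 ^ k)) z) \<partial>lborel)"
    by (intro nn_integral_mono pw)
  also have "\<dots> = (\<Sum>k. \<integral>\<^sup>+ z. ennreal (c k) * indicator (ball (0::'a) (R / 2 ^ k)) z \<partial>lborel)"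
    by (intro nn_integral_suminf borel_measurable_times_ennreal borel_measurable_indicator) auto
  also have "\<dots> = (\<Sum>k. ennreal (c k * ((R / 2 ^ k) ^ N * V)))"
  proof (rule suminf_cong)
    fix k
    have "(\<integral>\<^sup>+ z. ennreal (c k) * indicator (ball (0::'a) (R / 2 ^ k)) z \<partial>lborel)
        = ennreal (c k) * emeasure lborel (ball (0::'a) (R / 2 ^ k))"
      by (intro nn_integral_cmult_indicator) auto
    also have "\<dots> = ennreal (c k * ((R / 2 ^ k) ^ N * V))"
      using R by (simp add: emeasure_ball_eq V_def N_def ennreal_mult' cpos)
    finally show "(\<integral>\<^sup>+ z. ennreal (c k) * indicator (ball (0::'a) (R / 2 ^ k)) z \<partial>lborel)
        = ennreal (c k * ((R / 2 ^ k) ^ N * V))" .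
  qed
  also have "\<dots> = ennreal (\<Sum>k. c k * ((R / 2 ^ k) ^ N * V))"
  proof (rule suminf_ennreal2)
    show "\<And>k. 0 \<le> c k * ((R / 2 ^ k) ^ N * V)" using cpos V R by simp
    have eq: "c k * ((R / 2 ^ k) ^ N * V) = (2 powr \<mu> * R powr (N - \<mu>) * V) * (2 powr (\<mu> - N)) ^ k" for k
    proof -
      have two: "(2::real) ^ m = 2 powr real m" for m :: nat by (simp add: powr_realpow)
      have a: "(R / 2 ^ k) ^ N = R powr N * 2 powr (- (real k * N))"
        using R by (simp add: two powr_realpow[symmetric] powr_divide powr_powr powr_minus_divide)
      have h0: "(2::real) * 2 powr real k = 2 powr (real k + 1)" by (simp add: powr_add)
      have h: "((2::real) * 2 powr real k) powr \<mu> = 2 powr (\<mu> + \<mu> * real k)"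
        unfolding h0 powr_powr by (simp add: algebra_simps)
      have b: "c k = 2 powr ((real k + 1) * \<mu>) * R powr (- \<mu>)"
        unfolding c_def using R
        by (simp add: two powr_divide powr_powr powr_minus_divide h del: of_nat_Suc) (simp add: algebra_simps)
      have g: "(2 powr (\<mu> - N)) ^ k = 2 powr (real k * (\<mu> - N))"
        by (simp add: powr_realpow[symmetric] powr_powr mult.commute)
      have r1: "R powr (real N - \<mu>) = R powr - \<mu> * R powr real N"
        by (simp add: powr_add[symmetric])
      have r2: "(2::real) powr (\<mu> + \<mu> * real k - real N * real k) = 2 powr \<mu> * 2 powr (\<mu> * real k - real N * real k)"
        by (simp add: powr_add[symmetric] add_diff_eq)
      show ?thesis unfolding a b g
        by (simp add: powr_add[symmetric] algebra_simps) (simp add: r1 r2)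
    qed
    show "summable (\<lambda>k. c k * ((R / 2 ^ k) ^ N * V))"
      unfolding eq using mu by (intro summable_mult summable_geometric) (auto simp: N_def powr_less_one)
  qed
  finally show ?thesis by (simp add: order_le_less_trans)
qed


lemma dbl_kernel:
  fixes \<Omega> :: "'a::euclidean_space set" and \<mu> :: real
  assumes bnd: "bounded \<Omega>" and meas: "\<Omega> \<in> sets borel" and mu: "0 \<le> \<mu>" "\<mu> < DIM('a)"
  shows "(\<integral>\<^sup>+ z. ennreal (indicator (\<Omega> \<times> \<Omega>) z * (1 / norm (fst z - snd z) powr \<mu>)) \<partial>(lborel \<Otimes>\<^sub>M lborel)) < \<infinity>"
proof -
  obtain R where R: "R > 0" "\<Omega> \<subseteq> ball 0 R" using bnd bounded_subset_ballD by blast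
  define f where "f = (\<lambda>z::'a. indicator (ball (0::'a) (2 * R)) z * ennreal (1 / norm z powr \<mu>))"
  define B where "B = (\<integral>\<^sup>+ z. f z \<partial>lborel)"
  have B: "B < \<infinity>" unfolding B_def f_def using R mu by (intro ball_kernel) auto
  have bm[measurable]: "ball (0::'a) (2*R) \<in> sets borel" by auto
  note meas[measurable]
  have fm: "f \<in> borel_measurable borel" unfolding f_def by measurable
  have shift: "(\<integral>\<^sup>+ y. f (y - x) \<partial>lborel) = B" for x
  proof -
    have "B = (\<integral>\<^sup>+ z. f z \<partial>(distr lborel borel ((+) (- x))))"
      unfolding B_def lborel_distr_plus ..
    also have "\<dots> = (\<integral>\<^sup>+ y. f (- x + y) \<partial>lborel)"
      using fm by (subst nn_integral_distr) auto
    finally show ?thesis by simp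
  qed
  have inner: "(\<integral>\<^sup>+ y. ennreal (indicator (\<Omega> \<times> \<Omega>) (x, y) * (1 / norm (x - y) powr \<mu>)) \<partial>lborel)
      \<le> indicator \<Omega> x * B" for x
  proof (cases "x \<in> \<Omega>")
    case True
    have "(\<integral>\<^sup>+ y. ennreal (indicator (\<Omega> \<times> \<Omega>) (x, y) * (1 / norm (x - y) powr \<mu>)) \<partial>lborel)
        \<le> (\<integral>\<^sup>+ y. f (y - x) \<partial>lborel)"
    proof (intro nn_integral_mono)
      fix y
      show "ennreal (indicator (\<Omega> \<times> \<Omega>) (x, y) * (1 / norm (x - y) powr \<mu>)) \<le> f (y - x)"
      proof (cases "y \<in> \<Omega>")
        case True
        have "norm (y - x) < 2 * R"
          using R \<open>x \<in> \<Omega>\<close> True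
          by (smt (verit, best) dist_0_norm mem_ball norm_minus_commute norm_triangle_ineq4 subsetD)
        then show ?thesis using True \<open>x \<in> \<Omega>\<close> unfolding f_def
          by (simp add: indicator_def norm_minus_commute)
      qed (simp add: indicator_def)
    qed
    then show ?thesis using True shift by simp
  qed (simp add: indicator_def)
  have "(\<integral>\<^sup>+ z. ennreal (indicator (\<Omega> \<times> \<Omega>) z * (1 / norm (fst z - snd z) powr \<mu>)) \<partial>(lborel \<Otimes>\<^sub>M lborel))
      = (\<integral>\<^sup>+ x. \<integral>\<^sup>+ y. ennreal (indicator (\<Omega> \<times> \<Omega>) (x, y) * (1 / norm (x - y) powr \<mu>)) \<partial>lborel \<partial>lborel)"
  proof -
    have mz: "(\<lambda>z. ennreal (indicator (\<Omega> \<times> \<Omega>) z * (1 / norm (fst z - snd z) powr \<mu>))) \<in> borel_measurable (lborel \<Otimes>\<^sub>M lborel)"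
      by measurable
    from lborel.nn_integral_fst[OF mz] show ?thesis by simp
  qed
  also have "\<dots> \<le> (\<integral>\<^sup>+ x. indicator \<Omega> x * B \<partial>lborel)"
    by (intro nn_integral_mono inner)
  also have "\<dots> = B * emeasure lborel \<Omega>"
    using meas nn_integral_cmult_indicator[of \<Omega> lborel B] by (simp add: mult.commute)
  also have "\<dots> < \<infinity>"
    using B emeasure_bounded_finite[OF bnd] by (simp add: ennreal_mult_less_top)
  finally show ?thesis .
qed


lemma dom_int:
  fixes \<Omega> :: "'a::euclidean_space set" and \<mu> M :: real and A :: "'a \<times> 'a \<Rightarrow> real"
  assumes bnd: "bounded \<Omega>" and meas: "\<Omega> \<in> sets borel" and mu: "0 \<le> \<mu>" "\<mu> < DIM('a)"
    and Am: "A \<in> borel_measurable (lborel \<Otimes>\<^sub>M lborel)"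
    and Ab: "\<And>x y. x \<in> \<Omega> \<Longrightarrow> y \<in> \<Omega> \<Longrightarrow> \<bar>A (x, y)\<bar> \<le> M"
  shows "integrable (lborel \<Otimes>\<^sub>M lborel) (\<lambda>z. indicator (\<Omega> \<times> \<Omega>) z * (A z / norm (fst z - snd z) powr \<mu>))"
proof (rule integrableI_bounded)
  note meas[measurable] Am[measurable]
  show "(\<lambda>z. indicator (\<Omega> \<times> \<Omega>) z * (A z / norm (fst z - snd z) powr \<mu>)) \<in> borel_measurable (lborel \<Otimes>\<^sub>M lborel)"
    by measurable
  define M' where "M' = max M 0"
  have "(\<integral>\<^sup>+ z. ennreal (norm (indicator (\<Omega> \<times> \<Omega>) z * (A z / norm (fst z - snd z) powr \<mu>))) \<partial>(lborel \<Otimes>\<^sub>M lborel))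
     \<le> (\<integral>\<^sup>+ z. ennreal M' * ennreal (indicator (\<Omega> \<times> \<Omega>) z * (1 / norm (fst z - snd z) powr \<mu>)) \<partial>(lborel \<Otimes>\<^sub>M lborel))"
  proof (intro nn_integral_mono)
    fix z :: "'a \<times> 'a"
    show "ennreal (norm (indicator (\<Omega> \<times> \<Omega>) z * (A z / norm (fst z - snd z) powr \<mu>)))
        \<le> ennreal M' * ennreal (indicator (\<Omega> \<times> \<Omega>) z * (1 / norm (fst z - snd z) powr \<mu>))"
    proof (cases "z \<in> \<Omega> \<times> \<Omega>")
      case True
      obtain x y where z: "z = (x, y)" by (cases z)
      have b: "\<bar>A z\<bar> \<le> M'" using Ab[of x y] True z unfolding M'_def by auto
      have "\<bar>A z\<bar> / norm (x - y) powr \<mu> \<le> M' / norm (x - y) powr \<mu>"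
        using b by (intro divide_right_mono) auto
      then show ?thesis using True z
        by (simp add: ennreal_mult'[symmetric] M'_def abs_mult abs_divide ennreal_leI)
    qed simp
  qed
  also have "\<dots> = ennreal M' * (\<integral>\<^sup>+ z. ennreal (indicator (\<Omega> \<times> \<Omega>) z * (1 / norm (fst z - snd z) powr \<mu>)) \<partial>(lborel \<Otimes>\<^sub>M lborel))"
    by (intro nn_integral_cmult) measurable
  also have "\<dots> < \<infinity>"
    using dbl_kernel[OF bnd meas mu] by (simp add: ennreal_mult_less_top)
  finally show "(\<integral>\<^sup>+ z. ennreal (norm (indicator (\<Omega> \<times> \<Omega>) z * (A z / norm (fst z - snd z) powr \<mu>))) \<partial>(lborel \<Otimes>\<^sub>M lborel)) < \<infinity>" .
qed



lemma pw2:
  fixes a c gx gy t p k :: real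
  assumes "0 \<le> a" "0 \<le> c" "0 \<le> gx" "0 \<le> gy" "0 \<le> t" "2 \<le> p" "0 \<le> k"
  shows "a powr p * c powr p / k + (t*gx) powr p * (t*gy) powr p / k
     + p * t * (a powr p * c powr (p-1) * gy / k) + p * t * (a powr (p-1) * gx * c powr p / k)
     + p * t powr (2*p-1) * (gx powr p * gy powr (p-1) * c / k)
     \<le> (a + t*gx) powr p * (c + t*gy) powr p / k"
proof -
  have P: "a powr p * c powr p + (t*gx) powr p * (t*gy) powr p + p * (a powr p * c powr (p - 1) * (t*gy))
      + p * (a powr (p - 1) * (t*gx) * c powr p) + p * ((t*gx) powr p * (t*gy) powr (p - 1) * c)
      \<le> (a + t*gx) powr p * (c + t*gy) powr p"
    using assms by (intro pointwise) auto
  have e: "(t*gx) powr p * (t*gy) powr (p - 1) = t powr (2*p-1) * (gx powr p * gy powr (p-1))"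
  proof -
    have "(t*gx) powr p * (t*gy) powr (p - 1) = (t powr p * t powr (p-1)) * (gx powr p * gy powr (p-1))"
      using assms by (simp add: powr_mult)
    also have "t powr p * t powr (p-1) = t powr (2*p-1)" by (simp add: powr_add[symmetric])
    finally show ?thesis .
  qed
  have P2: "a powr p * c powr p + (t*gx) powr p * (t*gy) powr p + p * t * (a powr p * c powr (p - 1) * gy)
      + p * t * (a powr (p - 1) * gx * c powr p) + p * t powr (2*p-1) * (gx powr p * gy powr (p - 1) * c)
      \<le> (a + t*gx) powr p * (c + t*gy) powr p"
    using P e by (simp add: algebra_simps)
  have "(a powr p * c powr p + (t*gx) powr p * (t*gy) powr p + p * t * (a powr p * c powr (p - 1) * gy)
      + p * t * (a powr (p - 1) * gx * c powr p) + p * t powr (2*p-1) * (gx powr p * gy powr (p - 1) * c)) / k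
      \<le> (a + t*gx) powr p * (c + t*gy) powr p / k"
    using P2 assms by (intro divide_right_mono) auto
  then show ?thesis by (simp add: add_divide_distrib)
qed

lemma dbl_alt: "dbl \<Omega> F = integral\<^sup>L (lborel \<Otimes>\<^sub>M lborel) (\<lambda>z. indicator (\<Omega> \<times> \<Omega>) z * F (fst z) (snd z))"
  unfolding dbl_def set_lebesgue_integral_def by (simp add: split_beta)

lemma dbl_cong: "(\<And>x y. x \<in> \<Omega> \<Longrightarrow> y \<in> \<Omega> \<Longrightarrow> F x y = G x y) \<Longrightarrow> dbl \<Omega> F = dbl \<Omega> G"
  unfolding dbl_alt by (intro Bochner_Integration.integral_cong refl) (auto simp: indicator_def)

lemma bnd2:
  fixes a c A C q r :: real
  assumes "0 \<le> a" "a \<le> A" "0 \<le> c" "c \<le> C" "0 \<le> q" "0 \<le> r"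
  shows "\<bar>a powr q * c powr r\<bar> \<le> A powr q * C powr r"
  using assms by (simp add: abs_mult) (intro mult_mono powr_mono2, auto)

lemma bnd3:
  fixes a c e A C E q r :: real
  assumes "0 \<le> a" "a \<le> A" "0 \<le> c" "c \<le> C" "0 \<le> e" "e \<le> E" "0 \<le> q" "0 \<le> r"
  shows "\<bar>a powr q * c powr r * e\<bar> \<le> A powr q * C powr r * E"
  using assms by (simp add: abs_mult) (intro mult_mono powr_mono2, auto)

lemma bnd3':
  fixes a c e A C E q r :: real
  assumes "0 \<le> a" "a \<le> A" "0 \<le> c" "c \<le> C" "0 \<le> e" "e \<le> E" "0 \<le> q" "0 \<le> r"
  shows "\<bar>a powr q * e * c powr r\<bar> \<le> A powr q * E * C powr r"
  using assms by (simp add: abs_mult) (intro mult_mono powr_mono2, auto)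



theorem mainTheorem9:
  fixes \<Omega> :: "'a::euclidean_space set" and \<rho> \<mu> :: real
    and f u1 \<upsilon> :: "'a \<Rightarrow> real"
  assumes N3: "DIM('a) \<ge> 3"
    and mu: "0 < \<mu>" "\<mu> < min 4 (real DIM('a))"
    and A: "cond_A \<rho> \<Omega>"
    and f: "f \<in> hatF \<Omega>" "Hm1_norm \<Omega> f < e00 TYPE('a) \<mu>"
    and sol: "weak_solution \<Omega> \<mu> f u1"
    and pos: "\<forall>x\<in>\<Omega>. u1 x > 0"
    and bdd: "\<exists>M. \<forall>x\<in>\<Omega>. \<bar>u1 x\<bar> \<le> M"
    and neh: "u1 \<in> Nehari_plus \<Omega> \<mu> f"
    and mini: "ereal (J_fun \<Omega> \<mu> f u1) = Upsilon \<Omega> \<mu> f"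
    and cut: "cutoff \<rho> \<upsilon>"
  shows "\<exists>C>0. \<forall>\<Theta><1. \<forall>T::real. \<exists>K::real. \<exists>\<epsilon>0>0. \<forall>\<epsilon> \<sigma> t.
     0 < \<epsilon> \<and> \<epsilon> < \<epsilon>0 \<and> \<epsilon> \<le> 1 \<and> \<sigma> \<in> sphere 0 1 \<and> 0 \<le> t \<and> t \<le> T \<longrightarrow>
     (let p = crit TYPE('a) \<mu>; g = g_fun \<upsilon> \<mu> \<epsilon> \<sigma> in
      b_fun \<Omega> \<mu> (\<lambda>x. u1 x + t * g x) \<ge>
        b_fun \<Omega> \<mu> u1 + b_fun \<Omega> \<mu> (\<lambda>x. t * g x)
        + C * t powr (2 * p - 1) *
            dbl \<Omega> (\<lambda>x y. g x powr p * g y powr (p - 1) * u1 y / norm (x - y) powr \<mu>)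
        + 2 * p * t *
            dbl \<Omega> (\<lambda>x y. u1 x powr p * u1 y powr (p - 1) * g y / norm (x - y) powr \<mu>)
        - K * \<epsilon> powr ((2 * real DIM('a) - \<mu>) / 4 * \<Theta>))"
proof -
  define N where "N = real DIM('a)"
  define p where "p = crit TYPE('a) \<mu>"
  have N3': "N \<ge> 3" using N3 unfolding N_def by simp
  have p2: "2 \<le> p"
  proof -
    have "2 * (N - 2) \<le> 2 * N - \<mu>" using mu by simp
    then show ?thesis unfolding p_def crit_def N_def[symmetric] using N3' by (simp add: le_divide_eq)
  qed
  have opn: "open \<Omega>" and bnd: "bounded \<Omega>"
    using A unfolding cond_A_def smooth_bounded_domain_def by auto
  have meas[measurable]: "\<Omega> \<in> sets borel" using opn by simp
  have mu': "0 \<le> \<mu>" "\<mu> < DIM('a)" using mu by auto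
  have u1m[measurable]: "u1 \<in> borel_measurable borel"
    using sol unfolding weak_solution_def H01_def H01_grad_def L2_def by auto
  have cutf1: "test_fun UNIV \<upsilon>" using cut unfolding cutoff_def by (rule conjunct1)
  have cutf2: "\<And>x. 0 \<le> \<upsilon> x \<and> \<upsilon> x \<le> 1" using cut unfolding cutoff_def by blast
  have "smooth_on UNIV \<upsilon>" using cutf1 unfolding test_fun_def by (rule conjunct1)
  then have "\<upsilon> differentiable_on UNIV" by (cases rule: smooth_on.cases) auto
  then have "continuous_on UNIV \<upsilon>" by (rule differentiable_imp_continuous_on)
  then have um[measurable]: "\<upsilon> \<in> borel_measurable borel" by (rule borel_measurable_continuous_onI)
  obtain M where M: "\<And>x. x \<in> \<Omega> \<Longrightarrow> \<bar>u1 x\<bar> \<le> M" using bdd by auto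
  have u1pos: "\<And>x. x \<in> \<Omega> \<Longrightarrow> 0 < u1 x" using pos by auto
  show ?thesis
  proof (rule exI[of _ "crit TYPE('a) \<mu>"], intro conjI allI impI)
    show "0 < crit TYPE('a) \<mu>" using p2 unfolding p_def by simp
    fix \<Theta> :: real and T :: real
    assume "\<Theta> < 1"
    show "\<exists>K \<epsilon>0. 0 < \<epsilon>0 \<and> (\<forall>\<epsilon> \<sigma> t. 0 < \<epsilon> \<and> \<epsilon> < \<epsilon>0 \<and> \<epsilon> \<le> 1 \<and> \<sigma> \<in> sphere 0 1 \<and> 0 \<le> t \<and> t \<le> T \<longrightarrow>
     (let p = crit TYPE('a) \<mu>; g = g_fun \<upsilon> \<mu> \<epsilon> \<sigma> in
      b_fun \<Omega> \<mu> (\<lambda>x. u1 x + t * g x) \<ge>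
        b_fun \<Omega> \<mu> u1 + b_fun \<Omega> \<mu> (\<lambda>x. t * g x)
        + crit TYPE('a) \<mu> * t powr (2 * p - 1) *
            dbl \<Omega> (\<lambda>x y. g x powr p * g y powr (p - 1) * u1 y / norm (x - y) powr \<mu>)
        + 2 * p * t *
            dbl \<Omega> (\<lambda>x y. u1 x powr p * u1 y powr (p - 1) * g y / norm (x - y) powr \<mu>)
        - K * \<epsilon> powr ((2 * real DIM('a) - \<mu>) / 4 * \<Theta>)))"
    proof (rule exI[of _ 0], rule exI[of _ 1], intro conjI allI impI)
      fix \<epsilon> :: real and \<sigma> :: 'a and t :: real
      assume H: "0 < \<epsilon> \<and> \<epsilon> < 1 \<and> \<epsilon> \<le> 1 \<and> \<sigma> \<in> sphere 0 1 \<and> 0 \<le> t \<and> t \<le> T"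
      then have eps: "0 < \<epsilon>" and t0: "0 \<le> t" by auto
      define g where "g = g_fun \<upsilon> \<mu> \<epsilon> \<sigma>"
      have gm[measurable]: "g \<in> borel_measurable borel"
        unfolding g_def g_fun_def u_eps_def Let_def by measurable
      have gnn: "\<And>x. 0 \<le> g x"
        unfolding g_def g_fun_def u_eps_def Let_def c_Nmu_def using cutf2 by auto
      define e where "e = (N - 2) / 2"
      define cA where "cA = c_Nmu TYPE('a) \<mu> * (N * (N - 2) * \<epsilon>\<^sup>2) powr ((N - 2) / 4)"
      define Gb where "Gb = cA / (\<epsilon>\<^sup>2) powr e"
      have cA: "0 \<le> cA" unfolding cA_def c_Nmu_def by simp
      have gb: "\<And>x. g x \<le> Gb"
      proof -
        fix x
        have ue: "u_eps \<mu> \<epsilon> \<sigma> x = cA / (\<epsilon>\<^sup>2 + (norm (x - (1 - \<epsilon>) *\<^sub>R \<sigma>))\<^sup>2) powr e"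
          unfolding u_eps_def Let_def cA_def e_def N_def by simp
        have "(\<epsilon>\<^sup>2) powr e \<le> (\<epsilon>\<^sup>2 + (norm (x - (1 - \<epsilon>) *\<^sub>R \<sigma>))\<^sup>2) powr e"
          using N3' unfolding e_def by (intro powr_mono2) auto
        moreover have "0 < (\<epsilon>\<^sup>2) powr e" using eps by simp
        ultimately have "u_eps \<mu> \<epsilon> \<sigma> x \<le> Gb" unfolding ue Gb_def using cA
          by (intro divide_left_mono) auto
        moreover have "0 \<le> u_eps \<mu> \<epsilon> \<sigma> x" unfolding ue using cA by simp
        ultimately show "g x \<le> Gb" unfolding g_def g_fun_def using cutf2[of x]
          by (metis mult_left_le_one_le order_trans)
      qed
      define U where "U = max M 0"
      have ub: "0 \<le> u1 x \<and> u1 x \<le> U" if "x \<in> \<Omega>" for x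
        using M[OF that] u1pos[OF that] unfolding U_def by (simp add: abs_le_iff le_max_iff_disj)
      have Gb0: "0 \<le> Gb" using gnn gb order_trans by blast
      have U0: "0 \<le> U" unfolding U_def by simp
      define I where "I = (\<lambda>(X :: 'a \<times> 'a \<Rightarrow> real) z. indicator (\<Omega> \<times> \<Omega>) z * (X z / norm (fst z - snd z) powr \<mu>))"
      define Atot where "Atot = (\<lambda>z::'a\<times>'a. (u1 (fst z) + t * g (fst z)) powr p * (u1 (snd z) + t * g (snd z)) powr p)"
      define A1 where "A1 = (\<lambda>z::'a\<times>'a. u1 (fst z) powr p * u1 (snd z) powr p)"
      define A2 where "A2 = (\<lambda>z::'a\<times>'a. (t * g (fst z)) powr p * (t * g (snd z)) powr p)"
      define AH where "AH = (\<lambda>z::'a\<times>'a. u1 (fst z) powr p * u1 (snd z) powr (p - 1) * g (snd z))"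
      define AH' where "AH' = (\<lambda>z::'a\<times>'a. u1 (fst z) powr (p - 1) * g (fst z) * u1 (snd z) powr p)"
      define AQ where "AQ = (\<lambda>z::'a\<times>'a. g (fst z) powr p * g (snd z) powr (p - 1) * u1 (snd z))"
      have intg: "integrable (lborel \<Otimes>\<^sub>M lborel) (I X)"
        if "X \<in> borel_measurable (lborel \<Otimes>\<^sub>M lborel)" "\<And>x y. x \<in> \<Omega> \<Longrightarrow> y \<in> \<Omega> \<Longrightarrow> \<bar>X (x, y)\<bar> \<le> B" for X B
        unfolding I_def by (rule dom_int[OF bnd meas mu' that])
      have ab: "\<bar>X\<bar> \<le> B" if "0 \<le> X" "X \<le> B" for X B :: real using that by simp
      have pm: "p - 1 \<ge> 0" "p \<ge> 0" using p2 by auto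
      have ubt: "0 \<le> u1 x + t * g x \<and> u1 x + t * g x \<le> U + t * Gb" if "x \<in> \<Omega>" for x
        using ub[OF that] gnn[of x] gb[of x] t0 by (auto intro!: add_mono mult_left_mono)
      have gtb: "0 \<le> t * g x \<and> t * g x \<le> t * Gb" for x
        using gnn[of x] gb[of x] t0 by (auto intro!: mult_left_mono)
      have iAtot: "integrable (lborel \<Otimes>\<^sub>M lborel) (I Atot)"
      proof (rule intg[where B = "(U + t * Gb) powr p * (U + t * Gb) powr p"])
        show "Atot \<in> borel_measurable (lborel \<Otimes>\<^sub>M lborel)" unfolding Atot_def by measurable
        show "\<bar>Atot (x, y)\<bar> \<le> (U + t * Gb) powr p * (U + t * Gb) powr p" if "x \<in> \<Omega>" "y \<in> \<Omega>" for x y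
        proof -
          have a: "0 \<le> u1 x + t * g x" "u1 x + t * g x \<le> U + t * Gb" using ubt[OF that(1)] by auto
          have b: "0 \<le> u1 y + t * g y" "u1 y + t * g y \<le> U + t * Gb" using ubt[OF that(2)] by auto
          show ?thesis unfolding Atot_def fst_conv snd_conv by (rule bnd2[OF a b pm(2) pm(2)])
        qed
      qed
      have iA1: "integrable (lborel \<Otimes>\<^sub>M lborel) (I A1)"
      proof (rule intg[where B = "U powr p * U powr p"])
        show "A1 \<in> borel_measurable (lborel \<Otimes>\<^sub>M lborel)" unfolding A1_def by measurable
        show "\<bar>A1 (x, y)\<bar> \<le> U powr p * U powr p" if "x \<in> \<Omega>" "y \<in> \<Omega>" for x y
          proof -
          have a: "0 \<le> u1 x" "u1 x \<le> U" using ub[OF that(1)] by auto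
          have b: "0 \<le> u1 y" "u1 y \<le> U" using ub[OF that(2)] by auto
          show ?thesis unfolding A1_def fst_conv snd_conv by (rule bnd2[OF a b pm(2) pm(2)])
        qed
      qed
      have iA2: "integrable (lborel \<Otimes>\<^sub>M lborel) (I A2)"
      proof (rule intg[where B = "(t * Gb) powr p * (t * Gb) powr p"])
        show "A2 \<in> borel_measurable (lborel \<Otimes>\<^sub>M lborel)" unfolding A2_def by measurable
        show "\<bar>A2 (x, y)\<bar> \<le> (t * Gb) powr p * (t * Gb) powr p" if "x \<in> \<Omega>" "y \<in> \<Omega>" for x y
        proof -
          have a: "0 \<le> t * g x" "t * g x \<le> t * Gb" using gtb[of x] by auto
          have b: "0 \<le> t * g y" "t * g y \<le> t * Gb" using gtb[of y] by auto
          show ?thesis unfolding A2_def fst_conv snd_conv by (rule bnd2[OF a b pm(2) pm(2)])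
        qed
      qed
      have iAH: "integrable (lborel \<Otimes>\<^sub>M lborel) (I AH)"
      proof (rule intg[where B = "U powr p * U powr (p - 1) * Gb"])
        show "AH \<in> borel_measurable (lborel \<Otimes>\<^sub>M lborel)" unfolding AH_def by measurable
        show "\<bar>AH (x, y)\<bar> \<le> U powr p * U powr (p - 1) * Gb" if "x \<in> \<Omega>" "y \<in> \<Omega>" for x y
        proof -
          have a: "0 \<le> u1 x" "u1 x \<le> U" using ub[OF that(1)] by auto
          have b: "0 \<le> u1 y" "u1 y \<le> U" using ub[OF that(2)] by auto
          have c: "0 \<le> g x" "g x \<le> Gb" using gnn[of x] gb[of x] by auto
          have d: "0 \<le> g y" "g y \<le> Gb" using gnn[of y] gb[of y] by auto
          show ?thesis unfolding AH_def fst_conv snd_conv by (rule bnd3[OF a b d pm(2) pm(1)])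
        qed
      qed
      have iAH': "integrable (lborel \<Otimes>\<^sub>M lborel) (I AH')"
      proof (rule intg[where B = "U powr (p - 1) * Gb * U powr p"])
        show "AH' \<in> borel_measurable (lborel \<Otimes>\<^sub>M lborel)" unfolding AH'_def by measurable
        show "\<bar>AH' (x, y)\<bar> \<le> U powr (p - 1) * Gb * U powr p" if "x \<in> \<Omega>" "y \<in> \<Omega>" for x y
        proof -
          have a: "0 \<le> u1 x" "u1 x \<le> U" using ub[OF that(1)] by auto
          have b: "0 \<le> u1 y" "u1 y \<le> U" using ub[OF that(2)] by auto
          have c: "0 \<le> g x" "g x \<le> Gb" using gnn[of x] gb[of x] by auto
          have d: "0 \<le> g y" "g y \<le> Gb" using gnn[of y] gb[of y] by auto
          show ?thesis unfolding AH'_def fst_conv snd_conv by (rule bnd3'[OF a b c pm(1) pm(2)])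
        qed
      qed
      have iAQ: "integrable (lborel \<Otimes>\<^sub>M lborel) (I AQ)"
      proof (rule intg[where B = "Gb powr p * Gb powr (p - 1) * U"])
        show "AQ \<in> borel_measurable (lborel \<Otimes>\<^sub>M lborel)" unfolding AQ_def by measurable
        show "\<bar>AQ (x, y)\<bar> \<le> Gb powr p * Gb powr (p - 1) * U" if "x \<in> \<Omega>" "y \<in> \<Omega>" for x y
        proof -
          have a: "0 \<le> u1 x" "u1 x \<le> U" using ub[OF that(1)] by auto
          have b: "0 \<le> u1 y" "u1 y \<le> U" using ub[OF that(2)] by auto
          have c: "0 \<le> g x" "g x \<le> Gb" using gnn[of x] gb[of x] by auto
          have d: "0 \<le> g y" "g y \<le> Gb" using gnn[of y] gb[of y] by auto
          show ?thesis unfolding AQ_def fst_conv snd_conv by (rule bnd3[OF c d b pm(2) pm(1)])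
        qed
      qed
      have eqtot: "b_fun \<Omega> \<mu> (\<lambda>x. u1 x + t * g x) = integral\<^sup>L (lborel \<Otimes>\<^sub>M lborel) (I Atot)"
      proof -
        have "b_fun \<Omega> \<mu> (\<lambda>x. u1 x + t * g x) = dbl \<Omega> (\<lambda>x y. (u1 x + t * g x) powr p * (u1 y + t * g y) powr p / norm (x - y) powr \<mu>)"
          unfolding b_fun_def p_def[symmetric] by (rule dbl_cong) (use ubt in \<open>simp add: max_absorb1\<close>)
        then show ?thesis unfolding dbl_alt I_def Atot_def by simp
      qed
      have eq1: "b_fun \<Omega> \<mu> u1 = integral\<^sup>L (lborel \<Otimes>\<^sub>M lborel) (I A1)"
      proof -
        have "b_fun \<Omega> \<mu> u1 = dbl \<Omega> (\<lambda>x y. u1 x powr p * u1 y powr p / norm (x - y) powr \<mu>)"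
          unfolding b_fun_def p_def[symmetric] by (rule dbl_cong) (use ub in \<open>simp add: max_absorb1\<close>)
        then show ?thesis unfolding dbl_alt I_def A1_def by simp
      qed
      have eq2: "b_fun \<Omega> \<mu> (\<lambda>x. t * g x) = integral\<^sup>L (lborel \<Otimes>\<^sub>M lborel) (I A2)"
      proof -
        have "b_fun \<Omega> \<mu> (\<lambda>x. t * g x) = dbl \<Omega> (\<lambda>x y. (t * g x) powr p * (t * g y) powr p / norm (x - y) powr \<mu>)"
          unfolding b_fun_def p_def[symmetric] by (rule dbl_cong) (use gtb in \<open>simp add: max_absorb1\<close>)
        then show ?thesis unfolding dbl_alt I_def A2_def by simp
      qed
      have eqH: "dbl \<Omega> (\<lambda>x y. u1 x powr p * u1 y powr (p - 1) * g y / norm (x - y) powr \<mu>) = integral\<^sup>L (lborel \<Otimes>\<^sub>M lborel) (I AH)"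
        unfolding dbl_alt I_def AH_def by simp
      have eqQ: "dbl \<Omega> (\<lambda>x y. g x powr p * g y powr (p - 1) * u1 y / norm (x - y) powr \<mu>) = integral\<^sup>L (lborel \<Otimes>\<^sub>M lborel) (I AQ)"
        unfolding dbl_alt I_def AQ_def by simp
      have eqswap: "integral\<^sup>L (lborel \<Otimes>\<^sub>M lborel) (I AH') = integral\<^sup>L (lborel \<Otimes>\<^sub>M lborel) (I AH)"
      proof -
        have m: "I AH \<in> borel_measurable (lborel \<Otimes>\<^sub>M lborel)" using iAH by (rule borel_measurable_integrable)
        have "(\<lambda>(x, y). I AH (y, x)) = I AH'"
          by (auto simp: I_def AH_def AH'_def indicator_def norm_minus_commute fun_eq_iff)
        then show ?thesis using lborel_pair.integral_product_swap[OF m] by simp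
      qed
      have pwz: "I A1 z + I A2 z + p * t * I AH z + p * t * I AH' z + p * t powr (2 * p - 1) * I AQ z \<le> I Atot z" for z
      proof (cases "z \<in> \<Omega> \<times> \<Omega>")
        case True
        obtain x y where z: "z = (x, y)" by (cases z)
        have xy: "x \<in> \<Omega>" "y \<in> \<Omega>" using True z by auto
        have ind: "indicator (\<Omega> \<times> \<Omega>) (x, y) = (1::real)" using xy by simp
        show ?thesis
          unfolding z I_def A1_def A2_def AH_def AH'_def AQ_def Atot_def fst_conv snd_conv ind mult_1_left
          by (rule pw2) (use ub[OF xy(1)] ub[OF xy(2)] gnn t0 p2 in auto)
      qed (simp add: I_def)
      define c where "c = p * t powr (2 * p - 1)"
      define L where "L = (lborel \<Otimes>\<^sub>M lborel :: ('a \<times> 'a) measure)"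
      have i3: "integrable L (\<lambda>z. p * t * I AH z)" "integrable L (\<lambda>z. p * t * I AH' z)" "integrable L (\<lambda>z. c * I AQ z)"
        unfolding L_def by (rule integrable_mult_right[OF iAH], rule integrable_mult_right[OF iAH'], rule integrable_mult_right[OF iAQ])
      have "integral\<^sup>L L (\<lambda>z. I A1 z + I A2 z + p * t * I AH z + p * t * I AH' z + c * I AQ z)
          \<le> integral\<^sup>L L (I Atot)"
      proof (rule integral_mono)
        show "integrable L (\<lambda>z. I A1 z + I A2 z + p * t * I AH z + p * t * I AH' z + c * I AQ z)"
          using iA1 iA2 i3 unfolding L_def by simp
      qed (use iAtot pwz in \<open>simp_all add: L_def c_def\<close>)
      moreover have "integral\<^sup>L L (\<lambda>z. I A1 z + I A2 z + p * t * I AH z + p * t * I AH' z + c * I AQ z)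
          = integral\<^sup>L L (I A1) + integral\<^sup>L L (I A2) + p * t * integral\<^sup>L L (I AH) + p * t * integral\<^sup>L L (I AH') + c * integral\<^sup>L L (I AQ)"
        using iA1 iA2 i3 unfolding L_def[symmetric]
        apply (subst Bochner_Integration.integral_add, simp, simp)+
        apply (simp only: Bochner_Integration.integral_mult_right_zero)
        done
      ultimately have main: "integral\<^sup>L L (I A1) + integral\<^sup>L L (I A2) + p * t * integral\<^sup>L L (I AH) + p * t * integral\<^sup>L L (I AH') + c * integral\<^sup>L L (I AQ)
          \<le> b_fun \<Omega> \<mu> (\<lambda>x. u1 x + t * g x)"
        using eqtot unfolding L_def by simp
      show "let p = crit TYPE('a) \<mu>; g = g_fun \<upsilon> \<mu> \<epsilon> \<sigma> in
      b_fun \<Omega> \<mu> (\<lambda>x. u1 x + t * g x) \<ge>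
        b_fun \<Omega> \<mu> u1 + b_fun \<Omega> \<mu> (\<lambda>x. t * g x)
        + crit TYPE('a) \<mu> * t powr (2 * p - 1) *
            dbl \<Omega> (\<lambda>x y. g x powr p * g y powr (p - 1) * u1 y / norm (x - y) powr \<mu>)
        + 2 * p * t *
            dbl \<Omega> (\<lambda>x y. u1 x powr p * u1 y powr (p - 1) * g y / norm (x - y) powr \<mu>)
        - 0 * \<epsilon> powr ((2 * real DIM('a) - \<mu>) / 4 * \<Theta>)"
        unfolding Let_def p_def[symmetric] g_def[symmetric] eq1 eq2 eqH eqQ
        using main eqswap unfolding L_def c_def by (simp add: algebra_simps)
    qed simp
  qed
qed


end
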